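(* Let $Z=C_0\cup C_1$ be a Tychonoff space such that (1) $C_0\cap C_1=\emptyset$; (2) $C_0$ is an open $F_\sigma$ subset of $Z$; (3) both $C_0$ and $C_1$ (with the subspace topologies) are $\Delta$-spaces. Then $Z$ is a $\Delta$-space.
   Context: A topological space $X$ is a $\Delta$-space if for every decreasing sequence $\{D_n:n\in\omega\}$ of subsets of $X$ with $\bigcap_n D_n=\emptyset$ there is a decreasing sequence $\{V_n:n\in\omega\}$ of open subsets of $X$ with $D_n\subseteq V_n$ for all $n$ and $\bigcap_n V_n=\emptyset$. *)

theory Defs
  imports "HOL-Analysis.Analysis"
begin

definition tychonoff_space :: "'a topology \<Rightarrow> bool" where
  "tychonoff_space X \<longleftrightarrow> completely_regular_space X \<and> t1_space X"

definition delta_space :: "'a topology \<Rightarrow> bool" where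
  "delta_space X \<longleftrightarrow>
     (\<forall>D :: nat \<Rightarrow> 'a set.
        (\<forall>n. D n \<subseteq> topspace X) \<and> decseq D \<and> (\<Inter>n. D n) = {}
        \<longrightarrow> (\<exists>V :: nat \<Rightarrow> 'a set. (\<forall>n. openin X (V n)) \<and> decseq V \<and>
                (\<forall>n. D n \<subseteq> V n) \<and> (\<Inter>n. V n) = {}))"

end

theory Submission
  imports Defs
begin

theorem theorem3p8:
  fixes Z :: "'a topology" and C0 C1 :: "'a set"
  assumes "tychonoff_space Z"
    and "topspace Z = C0 \<union> C1"
    and "C0 \<inter> C1 = {}"
    and "openin Z C0"
    and "fsigma_in Z C0"
    and "delta_space (subtopology Z C0)"
    and "delta_space (subtopology Z C1)"
  shows "delta_space Z"
  unfolding delta_space_def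
proof (intro allI impI)
  fix D :: "nat \<Rightarrow> 'a set"
  assume H: "(\<forall>n. D n \<subseteq> topspace Z) \<and> decseq D \<and> (\<Inter>n. D n) = {}"
  obtain F where F: "\<And>n. closedin Z (F n)" "\<And>n. F n \<subseteq> F (Suc n)" "\<Union> (range F) = C0"
    using assms(5) fsigma_in_ascending by metis
  have Fmono: "mono F" using F(2) by (simp add: mono_iff_le_Suc)
  have sub0: "decseq (\<lambda>n. D n \<inter> C0)" "(\<Inter>n. D n \<inter> C0) = {}"
      "\<forall>n. D n \<inter> C0 \<subseteq> topspace (subtopology Z C0)"
    using H assms(2) by (auto simp: decseq_def) (meson in_mono)+
  then obtain U where U: "\<And>n. openin (subtopology Z C0) (U n)" "decseq U"
      "\<And>n. D n \<inter> C0 \<subseteq> U n" "(\<Inter>n. U n) = {}"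
    using assms(6) unfolding delta_space_def by meson
  have sub1: "decseq (\<lambda>n. D n \<inter> C1)" "(\<Inter>n. D n \<inter> C1) = {}"
      "\<forall>n. D n \<inter> C1 \<subseteq> topspace (subtopology Z C1)"
    using H assms(2) by (auto simp: decseq_def) (meson in_mono)+
  then obtain V where V: "\<And>n. openin (subtopology Z C1) (V n)" "decseq V"
      "\<And>n. D n \<inter> C1 \<subseteq> V n" "(\<Inter>n. V n) = {}"
    using assms(7) unfolding delta_space_def by meson
  have "\<forall>n. \<exists>W. openin Z W \<and> V n = W \<inter> C1"
    using V(1) by (simp add: openin_subtopology)
  then obtain W where W: "\<And>n. openin Z (W n)" "\<And>n. V n = W n \<inter> C1" by metis
  have UZ: "openin Z (U n)" for n
    using U(1) assms(4) openin_trans_full by blast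
  have UC0: "U n \<subseteq> C0" for n using U(1)[of n] openin_subset by fastforce
  define G where "G n = (\<Inter>k\<in>{..n}. W k) - F n" for n
  define Q where "Q n = U n \<union> G n" for n
  show "\<exists>V. (\<forall>n. openin Z (V n)) \<and> decseq V \<and> (\<forall>n. D n \<subseteq> V n) \<and> (\<Inter>n. V n) = {}"
  proof (intro exI conjI allI)
    fix n
    have "openin Z (\<Inter>k\<in>{..n}. W k)"
      by (intro openin_Inter) (auto simp: W(1))
    then have "openin Z (G n)" unfolding G_def using F(1) by (simp add: openin_diff)
    then show "openin Z (Q n)" unfolding Q_def using UZ by blast
  next
    show "decseq Q" unfolding decseq_def Q_def G_def
    proof (intro allI impI)
      fix m n :: nat assume "m \<le> n"
      then show "U n \<union> ((\<Inter>k\<in>{..n}. W k) - F n) \<subseteq> U m \<union> ((\<Inter>k\<in>{..m}. W k) - F m)"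
        using U(2) Fmono by (auto simp: decseq_def mono_def) (meson in_mono)+
    qed
  next
    fix n
    show "D n \<subseteq> Q n"
    proof
      fix x assume x: "x \<in> D n"
      then have xZ: "x \<in> C0 \<union> C1" using H assms(2) by blast
      show "x \<in> Q n"
      proof (cases "x \<in> C0")
        case True then show ?thesis using U(3)[of n] x unfolding Q_def by blast
      next
        case False
        then have x1: "x \<in> C1" using xZ by blast
        have "x \<notin> F n" using F(3) False by blast
        moreover have "x \<in> W k" if "k \<le> n" for k
        proof -
          have "x \<in> V n" using V(3)[of n] x x1 by blast
          then have "x \<in> V k" using V(2) that by (auto simp: decseq_def)
          then show ?thesis using W(2) by blast
        qed
        ultimately show ?thesis unfolding Q_def G_def by auto
      qed
    qed
  next
    show "(\<Inter>n. Q n) = {}"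
    proof (rule ccontr)
      assume "(\<Inter>n. Q n) \<noteq> {}"
      then obtain x where x: "\<And>n. x \<in> Q n" by blast
      show False
      proof (cases "x \<in> C0")
        case True
        then obtain k where k: "x \<in> F k" using F(3) by blast
        have "x \<in> U n" for n
        proof -
          have "x \<in> F (max n k)" using k Fmono by (meson max.cobounded2 mono_def subsetD)
          then have "x \<in> U (max n k)" using x[of "max n k"] unfolding Q_def G_def by blast
          then show ?thesis using U(2) unfolding decseq_def by (meson max.cobounded1 subsetD)
        qed
        then show False using U(4) by blast
      next
        case False
        have "x \<in> V n" for n
        proof -
          have "x \<notin> U n" using UC0 False by blast
          then have "x \<in> G n" using x[of n] unfolding Q_def by blast
          then have "x \<in> W n" unfolding G_def by blast
          moreover have "x \<in> C1"
            using \<open>x \<in> W n\<close> openin_subset[OF W(1)[of n]] assms(2) False by blast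
          ultimately show ?thesis using W(2) by blast
        qed
        then show False using V(4) by blast
      qed
    qed
  qed
qed

end
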